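(* For $j=0,\dots,n$, $$\varphi(y_j)=\sum_{i=0}^{\min(j,n-j)}2^{2i}\binom{n-2i}{j-i}\,p_i.$$
   Context: $B_n$: signed permutations $w=w_1\dots w_n$, values ordered $\cdots<-2<-1<1<2<\cdots$, $w_0=0$; $\mathrm{Des}(w)=\{i\in\{0,\dots,n-1\}:w_i>w_{i+1}\}$. $y_j=\sum_{w\in B_n,\ \#\mathrm{Des}(w)=j}w$. $\varphi$: linear extension of $w\mapsto|w_1|\dots|w_n|$ from $\mathbb{Q}B_n$ to $\mathbb{Q}\mathfrak{S}_n$. For $u\in\mathfrak{S}_n$, $\mathrm{Peak}(u)=\{i\in[n-1]:u_{i-1}<u_i>u_{i+1}\}$ with $u_0=0$, and $p_i=\sum_{u\in\mathfrak{S}_n,\ \#\mathrm{Peak}(u)=i}u$ for $0\le i\le\lfloor n/2\rfloor$. *)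

theory Defs
  imports Complex_Main "HOL-Library.Function_Algebras"
begin

(* Elements of the group algebras Q B_n and Q S_n are represented as coefficient
   functions: signed permutations are int lists w = [w_1,...,w_n], permutations are
   nat lists u = [u_1,...,u_n]. *)

definition perms :: "nat \<Rightarrow> nat list set" where
  "perms n = {u. distinct u \<and> set u = {1..n}}"

definition signed_perms :: "nat \<Rightarrow> int list set" where
  "signed_perms n = {w. 0 \<notin> set w \<and> map (\<lambda>x. nat \<bar>x\<bar>) w \<in> perms n}"

definition basis :: "'a \<Rightarrow> 'a \<Rightarrow> rat" where
  "basis g = (\<lambda>h. if h = g then 1 else 0)"

definition sdes :: "int list \<Rightarrow> nat set" where
  "sdes w = {i \<in> {0..<length w}. (0 # w) ! i > (0 # w) ! (i + 1)}"

definition peak :: "nat list \<Rightarrow> nat set" where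
  "peak u = {i \<in> {1..<length u}.
     (0 # u) ! (i - 1) < (0 # u) ! i \<and> (0 # u) ! i > (0 # u) ! (i + 1)}"

definition y :: "nat \<Rightarrow> nat \<Rightarrow> int list \<Rightarrow> rat" where
  "y n j = (\<Sum>w\<in>{w \<in> signed_perms n. card (sdes w) = j}. basis w)"

definition phi :: "nat \<Rightarrow> (int list \<Rightarrow> rat) \<Rightarrow> nat list \<Rightarrow> rat" where
  "phi n f = (\<Sum>w\<in>signed_perms n. (\<lambda>u. f w * basis (map (\<lambda>x. nat \<bar>x\<bar>) w) u))"

definition p :: "nat \<Rightarrow> nat \<Rightarrow> nat list \<Rightarrow> rat" where
  "p n i = (\<Sum>u\<in>{u \<in> perms n. card (peak u) = i}. basis u)"

end

theory Submission
  imports Defs "HOL-Computational_Algebra.Polynomial"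
begin


lemma count_gen:
  fixes c :: "nat \<Rightarrow> bool \<Rightarrow> nat"
  shows "card {s::bool list. length s = n \<and> (\<Sum>t<n. c t (s!t)) = j}
         = coeff (\<Prod>t<n. monom 1 (c t True) + monom 1 (c t False) :: nat poly) j"
proof (induction n arbitrary: j)
  case 0
  have "{s::bool list. length s = 0 \<and> (\<Sum>t<0. c t (s!t)) = j} = (if j = 0 then {[]} else {})"
    by auto
  then show ?case by (simp add: coeff_1)
next
  case (Suc n)
  define A where "A b = {s'::bool list. length s' = n \<and> (\<Sum>t<n. c t (s'!t)) + c n b = j}" for b
  have fin: "finite (A b)" for b
  proof -
    have "A b \<subseteq> {xs. set xs \<subseteq> UNIV \<and> length xs = n}" unfolding A_def by auto
    moreover have "finite {xs. set xs \<subseteq> (UNIV::bool set) \<and> length xs = n}"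
      by (rule finite_lists_length_eq) simp
    ultimately show ?thesis by (rule finite_subset)
  qed
  have sumapp: "(\<Sum>t<n. c t ((s' @ [b]) ! t)) = (\<Sum>t<n. c t (s' ! t))" if "length s' = n" for s' and b :: bool
    by (rule sum.cong) (auto simp: nth_append that)
  have eq: "{s::bool list. length s = Suc n \<and> (\<Sum>t<Suc n. c t (s!t)) = j}
      = (\<lambda>s'. s' @ [True]) ` A True \<union> (\<lambda>s'. s' @ [False]) ` A False"
  proof (intro equalityI subsetI)
    fix s assume "s \<in> {s::bool list. length s = Suc n \<and> (\<Sum>t<Suc n. c t (s!t)) = j}"
    then have l: "length s = Suc n" and sm: "(\<Sum>t<Suc n. c t (s!t)) = j" by auto
    have s: "s = butlast s @ [last s]" using l
      by (metis append_butlast_last_id list.size(3) nat.simps(3))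
    have lb: "length (butlast s) = n" using l by simp
    have "s ! n = last s" using l by (cases s rule: rev_cases) (auto simp: nth_append)
    then have "(\<Sum>t<Suc n. c t (s!t)) = (\<Sum>t<n. c t (butlast s ! t)) + c n (last s)"
    proof -
      have "(\<Sum>t<n. c t (s!t)) = (\<Sum>t<n. c t (butlast s ! t))"
        by (rule sum.cong) (auto simp: nth_butlast l)
      then show ?thesis using \<open>s ! n = last s\<close> by simp
    qed
    then have "butlast s \<in> A (last s)" using sm lb unfolding A_def by simp
    then show "s \<in> (\<lambda>s'. s' @ [True]) ` A True \<union> (\<lambda>s'. s' @ [False]) ` A False"
    proof (cases "last s")
      case True
      then show ?thesis using s \<open>butlast s \<in> A (last s)\<close>
        by (intro UnI1 image_eqI[where x="butlast s"]) auto
    next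
      case False
      then show ?thesis using s \<open>butlast s \<in> A (last s)\<close>
        by (intro UnI2 image_eqI[where x="butlast s"]) auto
    qed
  next
    fix s assume "s \<in> (\<lambda>s'. s' @ [True]) ` A True \<union> (\<lambda>s'. s' @ [False]) ` A False"
    then obtain s' b where "s = s' @ [b]" "s' \<in> A b" by auto
    then show "s \<in> {s::bool list. length s = Suc n \<and> (\<Sum>t<Suc n. c t (s!t)) = j}"
      unfolding A_def using sumapp by (auto simp: nth_append)
  qed
  have cardA: "card (A b) = (if j < c n b then 0 else card {s::bool list. length s = n \<and> (\<Sum>t<n. c t (s!t)) = j - c n b})" for b
  proof (cases "j < c n b")
    case True then have "A b = {}" unfolding A_def by auto
    then show ?thesis using True by simp
  next
    case False
    then have "A b = {s::bool list. length s = n \<and> (\<Sum>t<n. c t (s!t)) = j - c n b}"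
      unfolding A_def by auto
    then show ?thesis using False by simp
  qed
  have "card {s::bool list. length s = Suc n \<and> (\<Sum>t<Suc n. c t (s!t)) = j}
      = card (A True) + card (A False)"
    unfolding eq
    by (subst card_Un_disjoint) (auto simp: fin card_image inj_on_def)
  also have "\<dots> = coeff (monom 1 (c n True) * (\<Prod>t<n. monom 1 (c t True) + monom 1 (c t False) :: nat poly)) j
     + coeff (monom 1 (c n False) * (\<Prod>t<n. monom 1 (c t True) + monom 1 (c t False) :: nat poly)) j"
    by (simp add: cardA coeff_monom_mult Suc.IH)
  also have "\<dots> = coeff (\<Prod>t<Suc n. monom 1 (c t True) + monom 1 (c t False) :: nat poly) j"
    by (simp add: algebra_simps)
  finally show ?case .
qed



lemma sum_fun_apply: "(\<Sum>x\<in>A. f x) z = (\<Sum>x\<in>A. f x z)"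
  by (induction A rule: infinite_finite_induct) (auto simp: plus_fun_def zero_fun_def)

lemma sum_basis_apply: "finite S \<Longrightarrow> (\<Sum>x\<in>S. basis x) u = (if u \<in> S then 1 else 0)"
  unfolding sum_fun_apply basis_def by (simp add: eq_commute)

lemma perms_len: "u \<in> perms n \<Longrightarrow> length u = n"
proof -
  assume "u \<in> perms n"
  then have "distinct u" "set u = {1..n}" unfolding perms_def by auto
  then have "length u = card {1..n}" by (metis distinct_card)
  then show ?thesis by simp
qed

lemma finite_signed_perms: "finite (signed_perms n)"
proof -
  have "signed_perms n \<subseteq> {xs. set xs \<subseteq> {-int n..int n} \<and> length xs = n}"
  proof
    fix w assume w: "w \<in> signed_perms n"
    then have m: "map (\<lambda>x. nat \<bar>x\<bar>) w \<in> perms n" unfolding signed_perms_def by auto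
    then have "length w = n" using perms_len by fastforce
    moreover have "set w \<subseteq> {-int n..int n}"
    proof
      fix x assume "x \<in> set w"
      then have "nat \<bar>x\<bar> \<in> set (map (\<lambda>x. nat \<bar>x\<bar>) w)" by auto
      then have "nat \<bar>x\<bar> \<le> n" using m unfolding perms_def by auto
      then show "x \<in> {-int n..int n}" by auto
    qed
    ultimately show "w \<in> {xs. set xs \<subseteq> {-int n..int n} \<and> length xs = n}" by auto
  qed
  moreover have "finite {xs. set xs \<subseteq> {-int n..int n} \<and> length xs = n}"
    by (rule finite_lists_length_eq) simp
  ultimately show ?thesis by (rule finite_subset)
qed

lemma finite_perms: "finite (perms n)"
proof -
  have "perms n \<subseteq> {xs. set xs \<subseteq> {1..n} \<and> length xs = n}"
    using perms_len unfolding perms_def by auto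
  moreover have "finite {xs. set xs \<subseteq> {1..n} \<and> length xs = n}"
    by (rule finite_lists_length_eq) simp
  ultimately show ?thesis by (rule finite_subset)
qed

lemma lhs_eq:
  "phi n (y n j) u = of_nat (card {w \<in> signed_perms n. card (sdes w) = j \<and> map (\<lambda>x. nat \<bar>x\<bar>) w = u})"
proof -
  have fin: "finite {w \<in> signed_perms n. card (sdes w) = j}" using finite_signed_perms by auto
  have yv: "y n j w = (if w \<in> signed_perms n \<and> card (sdes w) = j then 1 else 0)" for w
    unfolding y_def using sum_basis_apply[OF fin] by simp
  have "phi n (y n j) u = (\<Sum>w\<in>signed_perms n. y n j w * basis (map (\<lambda>x. nat \<bar>x\<bar>) w) u)"
    unfolding phi_def sum_fun_apply by simp
  also have "\<dots> = (\<Sum>w\<in>signed_perms n. if card (sdes w) = j \<and> map (\<lambda>x. nat \<bar>x\<bar>) w = u then 1 else 0)"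
    by (rule sum.cong) (auto simp: yv basis_def)
  also have "\<dots> = of_nat (card {w \<in> signed_perms n. card (sdes w) = j \<and> map (\<lambda>x. nat \<bar>x\<bar>) w = u})"
    using finite_signed_perms by (simp add: sum.If_cases Int_def)
  finally show ?thesis .
qed

definition mk :: "bool list \<Rightarrow> nat list \<Rightarrow> int list" where
  "mk s u = map (\<lambda>(b, x). if b then - int x else int x) (zip s u)"

lemma fiber_eq:
  assumes u: "u \<in> perms n"
  shows "{w \<in> signed_perms n. map (\<lambda>x. nat \<bar>x\<bar>) w = u} = (\<lambda>s. mk s u) ` {s. length s = n}"
proof (intro equalityI subsetI)
  have lu: "length u = n" using perms_len u by auto
  fix w assume "w \<in> {w \<in> signed_perms n. map (\<lambda>x. nat \<bar>x\<bar>) w = u}"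
  then have w0: "0 \<notin> set w" and wu: "map (\<lambda>x. nat \<bar>x\<bar>) w = u" unfolding signed_perms_def by auto
  define s where "s = map (\<lambda>x. x < 0) w"
  have "length w = n" using wu lu by auto
  moreover have "mk s u = w"
    unfolding mk_def s_def wu[symmetric]
    by (rule nth_equalityI) auto
  ultimately show "w \<in> (\<lambda>s. mk s u) ` {s. length s = n}"
    by (intro image_eqI[where x=s]) (auto simp: s_def)
next
  have lu: "length u = n" using perms_len u by auto
  have u0: "0 \<notin> set u" using u unfolding perms_def by auto
  fix w assume "w \<in> (\<lambda>s. mk s u) ` {s. length s = n}"
  then obtain s where s: "length s = n" "w = mk s u" by auto
  have "map (\<lambda>x. nat \<bar>x\<bar>) w = u" unfolding s mk_def
    by (rule nth_equalityI) (auto simp: s lu)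
  moreover have "0 \<notin> set w"
  proof
    assume "0 \<in> set w"
    then obtain i where "i < n" "w ! i = 0" using s lu unfolding mk_def by (auto simp: in_set_conv_nth)
    then have "u ! i = 0" using s lu unfolding mk_def by (auto split: if_splits)
    then show False using u0 \<open>i < n\<close> lu by (metis nth_mem)
  qed
  ultimately show "w \<in> {w \<in> signed_perms n. map (\<lambda>x. nat \<bar>x\<bar>) w = u}"
    using u unfolding signed_perms_def by auto
qed

lemma mk_inj:
  assumes u: "u \<in> perms n"
  shows "inj_on (\<lambda>s. mk s u) {s. length s = n}"
proof (rule inj_onI)
  have lu: "length u = n" using perms_len u by auto
  have u0: "0 \<notin> set u" using u unfolding perms_def by auto
  fix s t assume s: "s \<in> {s. length s = n}" and t: "t \<in> {s. length s = n}" and e: "mk s u = mk t u"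
  show "s = t"
  proof (rule nth_equalityI)
    show "length s = length t" using s t by auto
    fix i assume "i < length s"
    then have i: "i < n" using s by auto
    have "mk s u ! i = mk t u ! i" using e by simp
    moreover have "u ! i \<noteq> 0" using u0 i lu by (metis nth_mem)
    ultimately show "s ! i = t ! i" using i s t lu unfolding mk_def by (auto split: if_splits)
  qed
qed

lemma card_fiber:
  assumes u: "u \<in> perms n"
  shows "card {w \<in> signed_perms n. card (sdes w) = j \<and> map (\<lambda>x. nat \<bar>x\<bar>) w = u}
       = card {s. length s = n \<and> card (sdes (mk s u)) = j}"
proof -
  have "{w \<in> signed_perms n. card (sdes w) = j \<and> map (\<lambda>x. nat \<bar>x\<bar>) w = u}
      = (\<lambda>s. mk s u) ` {s. length s = n \<and> card (sdes (mk s u)) = j}"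
  proof -
    have "{w \<in> signed_perms n. card (sdes w) = j \<and> map (\<lambda>x. nat \<bar>x\<bar>) w = u}
       = {w \<in> {w \<in> signed_perms n. map (\<lambda>x. nat \<bar>x\<bar>) w = u}. card (sdes w) = j}" by auto
    also have "\<dots> = {w \<in> (\<lambda>s. mk s u) ` {s. length s = n}. card (sdes w) = j}"
      by (simp only: fiber_eq[OF u])
    also have "\<dots> = (\<lambda>s. mk s u) ` {s. length s = n \<and> card (sdes (mk s u)) = j}" by auto
    finally show ?thesis .
  qed
  moreover have "inj_on (\<lambda>s. mk s u) {s. length s = n \<and> card (sdes (mk s u)) = j}"
    using mk_inj[OF u] by (rule inj_on_subset) (simp add: subset_iff)
  ultimately show ?thesis by (simp add: card_image)
qed



definition Aa :: "nat list \<Rightarrow> nat \<Rightarrow> bool" where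
  "Aa u t = ((0#u)!t < (0#u)!(t+1))"
definition Rr :: "nat \<Rightarrow> nat list \<Rightarrow> nat \<Rightarrow> bool" where
  "Rr n u t = (t + 1 < n \<and> (0#u)!(t+1) > (0#u)!(t+2))"
definition cc :: "nat \<Rightarrow> nat list \<Rightarrow> nat \<Rightarrow> bool \<Rightarrow> nat" where
  "cc n u t b = (if Aa u t \<and> b then 1 else 0) + (if Rr n u t \<and> \<not> b then 1 else 0)"

lemma cmp_signed:
  fixes a b :: nat
  assumes "a \<noteq> b"
  shows "((if bp then - int a else int a) > (if bq then - int b else int b))
         = ((a < b \<and> bq) \<or> (b < a \<and> \<not> bp))"
  using assms by (cases bp; cases bq) auto

lemma v_distinct:
  assumes u: "u \<in> perms n"
  shows "distinct (0#u)" "length (0#u) = Suc n"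
  using u perms_len[OF u] unfolding perms_def by auto

lemma v_neq:
  assumes u: "u \<in> perms n" and i: "i < n"
  shows "(0#u)!i \<noteq> (0#u)!(i+1)"
proof
  assume "(0#u)!i = (0#u)!(i+1)"
  then have "i = i + 1" using v_distinct[OF u] i nth_eq_iff_index_eq
    by (metis Suc_eq_plus1 Suc_mono less_SucI)
  then show False by simp
qed

lemma nth_0mk:
  assumes "length s = n" "length u = n" "i \<le> n"
  shows "(0 # mk s u) ! i = (if (False#s)!i then - int ((0#u)!i) else int ((0#u)!i))"
proof (cases i)
  case 0 then show ?thesis by simp
next
  case (Suc k)
  then have "k < n" using assms by simp
  then show ?thesis using Suc assms unfolding mk_def by simp
qed

lemma card_filter_sum: "finite A \<Longrightarrow> card {x \<in> A. P x} = (\<Sum>x\<in>A. if P x then 1 else 0)"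
  by (simp add: sum.If_cases Int_def)

lemma des_sum:
  assumes u: "u \<in> perms n" and s: "length s = n"
  shows "card (sdes (mk s u)) = (\<Sum>t<n. cc n u t (s!t))"
proof -
  have lu: "length u = n" using perms_len[OF u] .
  have lw: "length (mk s u) = n" using s lu unfolding mk_def by simp
  define f where "f i = (if (0#u)!(i+1) < (0#u)!i \<and> \<not> (False#s)!i then 1 else 0 :: nat)" for i
  have D: "(if (0 # mk s u) ! i > (0 # mk s u) ! (i + 1) then 1 else 0)
      = (if Aa u i \<and> s!i then 1 else 0) + f i" if i: "i < n" for i
  proof -
    have e: "(False#s)!(i+1) = s!i" by simp
    have x: "(0 # mk s u) ! i = (if (False#s)!i then - int ((0#u)!i) else int ((0#u)!i))"
      using nth_0mk[OF s lu, of i] i by simp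
    have y: "(0 # mk s u) ! (i+1) = (if s!i then - int ((0#u)!(i+1)) else int ((0#u)!(i+1)))"
      using nth_0mk[OF s lu, of "i+1"] i unfolding e by simp
    show ?thesis unfolding x y cmp_signed[OF v_neq[OF u i]] f_def Aa_def by simp
  qed
  have "card (sdes (mk s u)) = (\<Sum>i<n. if (0 # mk s u) ! i > (0 # mk s u) ! (i + 1) then 1 else 0)"
    unfolding sdes_def lw atLeast0LessThan by (rule card_filter_sum) simp
  also have "\<dots> = (\<Sum>i<n. (if Aa u i \<and> s!i then 1 else 0) + f i)"
    by (rule sum.cong[OF refl]) (rule D, simp)
  also have "\<dots> = (\<Sum>i<n. (if Aa u i \<and> s!i then 1 else 0)) + (\<Sum>i<n. f i)"
    by (simp add: sum.distrib)
  also have "(\<Sum>i<n. f i) = (\<Sum>t<n. if Rr n u t \<and> \<not> s!t then 1 else 0)"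
  proof (cases n)
    case 0 then show ?thesis by simp
  next
    case (Suc m)
    have "(\<Sum>i<n. f i) = f 0 + (\<Sum>t<m. f (Suc t))" unfolding Suc by (rule sum.lessThan_Suc_shift)
    also have "f 0 = 0" unfolding f_def by simp
    also have "(\<Sum>t<m. f (Suc t)) = (\<Sum>t<m. if Rr n u t \<and> \<not> s!t then 1 else 0)"
      by (rule sum.cong) (auto simp: f_def Rr_def Suc)
    also have "\<dots> = (\<Sum>t<n. if Rr n u t \<and> \<not> s!t then 1 else 0)"
      unfolding Suc by (simp add: Rr_def)
    finally show ?thesis by simp
  qed
  finally show ?thesis unfolding cc_def by (simp add: sum.distrib)
qed



lemma count_AR:
  assumes u: "u \<in> perms n"
  shows "(\<Sum>t<n. (if Aa u t then 1 else 0) + (if Rr n u t then 1 else 0)) = (n::nat)"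
proof (cases n)
  case 0 then show ?thesis by simp
next
  case (Suc m)
  have lu: "length u = n" using perms_len[OF u] .
  have u0: "0 \<notin> set u" using u unfolding perms_def by auto
  have A0: "Aa u 0"
  proof -
    have "u ! 0 \<in> set u" using lu Suc by simp
    then have "u ! 0 \<noteq> 0" using u0 by metis
    then show ?thesis unfolding Aa_def by simp
  qed
  have one: "(if Aa u (Suc t) then 1 else 0) + (if Rr n u t then 1 else 0) = (1::nat)" if t: "t < m" for t
  proof -
    have "t + 1 < n" using t Suc by simp
    then have "(0#u)!(t+1) \<noteq> (0#u)!(t+1+1)" by (rule v_neq[OF u])
    then show ?thesis unfolding Aa_def Rr_def using \<open>t + 1 < n\<close> by (auto simp: numeral_2_eq_2)
  qed
  have "(\<Sum>t<n. (if Aa u t then 1 else 0) + (if Rr n u t then 1 else 0))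
     = (\<Sum>t<n. (if Aa u t then 1 else 0)) + (\<Sum>t<n. (if Rr n u t then 1 else (0::nat)))"
    by (simp add: sum.distrib)
  also have "(\<Sum>t<n. (if Aa u t then 1 else (0::nat))) = 1 + (\<Sum>t<m. (if Aa u (Suc t) then 1 else 0))"
    unfolding Suc sum.lessThan_Suc_shift using A0 by simp
  also have "(\<Sum>t<n. (if Rr n u t then 1 else (0::nat))) = (\<Sum>t<m. (if Rr n u t then 1 else 0))"
    unfolding Suc by (simp add: Rr_def)
  also have "1 + (\<Sum>t<m. (if Aa u (Suc t) then 1 else (0::nat))) + (\<Sum>t<m. (if Rr n u t then 1 else 0))
      = 1 + (\<Sum>t<m. (if Aa u (Suc t) then 1 else (0::nat)) + (if Rr n u t then 1 else 0))"
    by (simp add: sum.distrib)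
  also have "\<dots> = 1 + (\<Sum>t<m. (1::nat))"
    using one by simp
  finally show ?thesis using Suc by simp
qed

lemma peak_eq:
  assumes u: "u \<in> perms n"
  shows "peak u = Suc ` {t \<in> {..<n}. Aa u t \<and> Rr n u t}"
proof (intro equalityI subsetI)
  have lu: "length u = n" using perms_len[OF u] .
  fix i assume "i \<in> peak u"
  then have i: "1 \<le> i" "i < n" "(0#u)!(i-1) < (0#u)!i" "(0#u)!i > (0#u)!(i+1)"
    unfolding peak_def lu by auto
  define t where "t = i - 1"
  have it: "i = Suc t" using i(1) unfolding t_def by simp
  have "Aa u t \<and> Rr n u t" "t < n" using i unfolding it Aa_def Rr_def by (auto simp: numeral_2_eq_2)
  then show "i \<in> Suc ` {t \<in> {..<n}. Aa u t \<and> Rr n u t}" using it by blast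
next
  have lu: "length u = n" using perms_len[OF u] .
  fix i assume "i \<in> Suc ` {t \<in> {..<n}. Aa u t \<and> Rr n u t}"
  then obtain t where it: "i = Suc t" and t: "Aa u t" "Rr n u t" by blast
  then show "i \<in> peak u" unfolding peak_def lu Aa_def Rr_def by (auto simp: numeral_2_eq_2)
qed

lemma card_peak:
  assumes u: "u \<in> perms n"
  shows "card (peak u) = card {t \<in> {..<n}. Aa u t \<and> Rr n u t}"
  unfolding peak_eq[OF u] by (rule card_image) simp

lemma prod_if_const:
  assumes "finite A"
  shows "(\<Prod>x\<in>A. if Q x then (a::'a::comm_monoid_mult) else b) = a ^ card {x\<in>A. Q x} * b ^ card {x\<in>A. \<not> Q x}"
proof -
  have "(\<Prod>x\<in>A. if Q x then a else b) = (\<Prod>x\<in>A \<inter> {x. Q x}. a) * (\<Prod>x\<in>A \<inter> - {x. Q x}. b)"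
    using assms by (rule prod.If_cases)
  also have "A \<inter> {x. Q x} = {x\<in>A. Q x}" by blast
  also have "A \<inter> - {x. Q x} = {x\<in>A. \<not> Q x}" by blast
  finally show ?thesis by simp
qed

lemma factor_eq:
  "monom 1 (cc n u t True) + monom 1 (cc n u t False) =
   (if Aa u t \<and> Rr n u t then [:0, 2:] else if Aa u t \<noteq> Rr n u t then [:1, 1:] else [:2::nat:])"
  unfolding cc_def by (auto simp: monom_Suc monom_0 numeral_2_eq_2 one_pCons)



lemma coeff_11_power: "coeff ([:1, 1:] ^ m :: nat poly) i = m choose i"
proof (cases "i \<le> m")
  case True then show ?thesis using coeff_linear_poly_power[OF True, of "1::nat" 1] by simp
next
  case False
  have "degree ([:1, 1:] ^ m :: nat poly) \<le> m"
    using degree_power_le[of "[:1, 1:] :: nat poly" m] by simp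
  then have "coeff ([:1, 1:] ^ m :: nat poly) i = 0" using False by (intro coeff_eq_0) simp
  then show ?thesis using False by simp
qed

lemma card_signs:
  assumes u: "u \<in> perms n"
  defines "P \<equiv> card (peak u)"
  shows "2 * P \<le> n \<and> card {s. length s = n \<and> card (sdes (mk s u)) = j}
     = (if j < P then 0 else 2 ^ (2 * P) * ((n - 2 * P) choose (j - P)))"
proof -
  define AR where "AR t = (Aa u t \<and> Rr n u t)" for t
  define Oc where "Oc = card {t \<in> {..<n}. \<not> AR t \<and> Aa u t \<noteq> Rr n u t}"
  define Z where "Z = card {t \<in> {..<n}. \<not> AR t \<and> \<not> Aa u t \<noteq> Rr n u t}"
  have P: "P = card {t \<in> {..<n}. AR t}" unfolding P_def AR_def by (rule card_peak[OF u])
  have c1: "P + Oc + Z = n"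
  proof -
    have "(\<Sum>t<n. (1::nat)) = (\<Sum>t<n. (if AR t then 1 else 0) + (if \<not> AR t \<and> Aa u t \<noteq> Rr n u t then 1 else 0)
           + (if \<not> AR t \<and> \<not> Aa u t \<noteq> Rr n u t then 1 else 0))"
      by (rule sum.cong) auto
    also have "\<dots> = P + Oc + Z" unfolding P Oc_def Z_def card_filter_sum[OF finite_lessThan]
      by (simp add: sum.distrib)
    finally show ?thesis by simp
  qed
  have c2: "2 * P + Oc = n"
  proof -
    have "n = (\<Sum>t<n. (if Aa u t then 1 else 0) + (if Rr n u t then 1 else 0))"
      using count_AR[OF u] by simp
    also have "\<dots> = (\<Sum>t<n. 2 * (if AR t then 1 else 0) + (if \<not> AR t \<and> Aa u t \<noteq> Rr n u t then 1 else 0))"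
      by (rule sum.cong) (auto simp: AR_def)
    also have "\<dots> = 2 * P + Oc" unfolding P Oc_def card_filter_sum[OF finite_lessThan]
      by (simp add: sum.distrib sum_distrib_left)
    finally show ?thesis by simp
  qed
  have ZP: "Z = P" and OP: "Oc = n - 2 * P" using c1 c2 by auto
  have "{s. length s = n \<and> card (sdes (mk s u)) = j} = {s. length s = n \<and> (\<Sum>t<n. cc n u t (s!t)) = j}"
    using des_sum[OF u] by auto
  then have "card {s. length s = n \<and> card (sdes (mk s u)) = j}
      = coeff (\<Prod>t<n. monom 1 (cc n u t True) + monom 1 (cc n u t False) :: nat poly) j"
    by (simp add: count_gen)
  also have "(\<Prod>t<n. monom 1 (cc n u t True) + monom 1 (cc n u t False) :: nat poly)
      = (\<Prod>t<n. if AR t then [:0, 2:] else if Aa u t \<noteq> Rr n u t then [:1, 1:] else [:2:])"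
    unfolding factor_eq AR_def ..
  also have "\<dots> = [:0, 2:] ^ P * (\<Prod>t\<in>{t \<in> {..<n}. \<not> AR t}. if Aa u t \<noteq> Rr n u t then [:1, 1:] else [:2:])"
  proof -
    have "(\<Prod>t<n. if AR t then [:0, 2:] else if Aa u t \<noteq> Rr n u t then [:1, 1:] else [:2::nat:])
       = (\<Prod>t\<in>{..<n} \<inter> {t. AR t}. [:0, 2:]) * (\<Prod>t\<in>{..<n} \<inter> - {t. AR t}. if Aa u t \<noteq> Rr n u t then [:1, 1:] else [:2:])"
      by (rule prod.If_cases) simp
    also have "{..<n} \<inter> {t. AR t} = {t \<in> {..<n}. AR t}" by blast
    also have "{..<n} \<inter> - {t. AR t} = {t \<in> {..<n}. \<not> AR t}" by blast
    finally show ?thesis unfolding P by simp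
  qed
  also have "(\<Prod>t\<in>{t \<in> {..<n}. \<not> AR t}. if Aa u t \<noteq> Rr n u t then [:1, 1:] else [:2::nat:])
      = [:1, 1:] ^ Oc * [:2:] ^ Z"
  proof -
    have "(\<Prod>t\<in>{t \<in> {..<n}. \<not> AR t}. if Aa u t \<noteq> Rr n u t then [:1, 1:] else [:2::nat:])
      = [:1, 1:] ^ card {t \<in> {t \<in> {..<n}. \<not> AR t}. Aa u t \<noteq> Rr n u t}
        * [:2:] ^ card {t \<in> {t \<in> {..<n}. \<not> AR t}. \<not> Aa u t \<noteq> Rr n u t}"
      by (rule prod_if_const) simp
    also have "{t \<in> {t \<in> {..<n}. \<not> AR t}. Aa u t \<noteq> Rr n u t} = {t \<in> {..<n}. \<not> AR t \<and> Aa u t \<noteq> Rr n u t}" by blast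
    also have "{t \<in> {t \<in> {..<n}. \<not> AR t}. \<not> Aa u t \<noteq> Rr n u t} = {t \<in> {..<n}. \<not> AR t \<and> \<not> Aa u t \<noteq> Rr n u t}" by blast
    finally show ?thesis unfolding Oc_def Z_def .
  qed
  also have "[:0, 2:] ^ P * ([:1, 1:] ^ Oc * [:2:] ^ Z) = monom (2 ^ (2 * P)) P * ([:1, 1:] ^ Oc :: nat poly)"
  proof -
    have m1: "[:0, 2::nat:] = monom 2 1" by (simp add: monom_Suc monom_0)
    have m0: "[:2::nat:] = monom 2 0" by (simp add: monom_0)
    have "[:0, 2:] ^ P * ([:1, 1:] ^ Oc * [:2:] ^ Z) = (monom 2 1 ^ P * monom 2 0 ^ P) * ([:1, 1:] ^ Oc :: nat poly)"
      unfolding m1 ZP unfolding m0 by (simp only: mult_ac)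
    also have "monom 2 1 ^ P * monom 2 0 ^ P = (monom (2 ^ (2 * P)) P :: nat poly)"
      by (simp add: monom_power mult_monom power_add[symmetric] mult_2)
    finally show ?thesis .
  qed
  also have "coeff (monom (2 ^ (2 * P)) P * ([:1, 1:] ^ Oc :: nat poly)) j
      = (if j < P then 0 else 2 ^ (2 * P) * ((n - 2 * P) choose (j - P)))"
    unfolding coeff_monom_mult coeff_11_power OP by simp
  finally show ?thesis using c2 by simp
qed



theorem proposition6p2:
  fixes n j :: nat
  assumes "j \<le> n"
  shows "phi n (y n j) =
    (\<Sum>i = 0..min j (n - j). (\<lambda>u. of_nat (2 ^ (2 * i) * ((n - 2 * i) choose (j - i))) * p n i u))"
proof
  fix u
  have pv: "p n i u = (if u \<in> perms n \<and> card (peak u) = i then 1 else 0)" for i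
  proof -
    have "finite {u \<in> perms n. card (peak u) = i}" using finite_perms by simp
    then show ?thesis unfolding p_def by (simp add: sum_basis_apply)
  qed
  have R: "(\<Sum>i = 0..min j (n - j). (\<lambda>u. of_nat (2 ^ (2 * i) * ((n - 2 * i) choose (j - i))) * p n i u)) u
     = (\<Sum>i = 0..min j (n - j). of_nat (2 ^ (2 * i) * ((n - 2 * i) choose (j - i))) * p n i u)"
    by (rule sum_fun_apply)
  show "phi n (y n j) u = (\<Sum>i = 0..min j (n - j). (\<lambda>u. of_nat (2 ^ (2 * i) * ((n - 2 * i) choose (j - i))) * p n i u)) u"
  proof (cases "u \<in> perms n")
    case False
    have E: "{w \<in> signed_perms n. card (sdes w) = j \<and> map (\<lambda>x. nat \<bar>x\<bar>) w = u} = {}"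
      using False unfolding signed_perms_def by auto
    then show ?thesis unfolding lhs_eq R pv E using False by simp
  next
    case True
    define P where "P = card (peak u)"
    have cs: "2 * P \<le> n" "card {s. length s = n \<and> card (sdes (mk s u)) = j}
     = (if j < P then 0 else 2 ^ (2 * P) * ((n - 2 * P) choose (j - P)))"
      using card_signs[OF True, of j] unfolding P_def by auto
    have "(\<Sum>i = 0..min j (n - j). of_nat (2 ^ (2 * i) * ((n - 2 * i) choose (j - i))) * p n i u)
        = (\<Sum>i = 0..min j (n - j). if P = i then of_nat (2 ^ (2 * i) * ((n - 2 * i) choose (j - i))) else (0::rat))"
      by (rule sum.cong) (auto simp: pv True P_def)
    also have "\<dots> = (if P \<in> {0..min j (n - j)} then of_nat (2 ^ (2 * P) * ((n - 2 * P) choose (j - P))) else 0)"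
      by (rule sum.delta'[OF finite_atLeastAtMost])
    also have "\<dots> = of_nat (if j < P then 0 else 2 ^ (2 * P) * ((n - 2 * P) choose (j - P)))"
    proof (cases "P \<le> min j (n - j)")
      case True then show ?thesis by auto
    next
      case False
      show ?thesis
      proof (cases "j < P")
        case True then show ?thesis by auto
      next
        case False2: False
        then have "n - 2 * P < j - P" using False cs(1) by auto
        then show ?thesis using False False2 by (auto simp: binomial_eq_0)
      qed
    qed
    finally show ?thesis unfolding lhs_eq R card_fiber[OF True] cs(2) by simp
  qed
qed

end
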